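(* Let $z_i=(y_i',x_i')'$, $i=1,\dots,n$, with $y_i\in\mathbb{R}^q$, $x_i\in\mathbb{R}^p$, be a sample satisfying the multivariate linear model $y_i=B_0'x_i+u_i$ ($B_0\in\mathbb{R}^{p\times q}$). Let $\rho_0,\rho_1$ be $\rho$-functions with $\rho_1\le\rho_0$, let $(\tilde B_n,\tilde\Sigma_n)\in\mathbb{R}^{p\times q}\times\mathcal{S}_q$ be initial estimates with $|\tilde\Sigma_n|=1$, let $\hat\sigma_n=s\big(d_1(\tilde B_n,\tilde\Sigma_n),\dots,d_n(\tilde B_n,\tilde\Sigma_n)\big)$ be the M-scale of the Mahalanobis norms computed with $\rho_0$ and $b=0.5$, and let $$S(B,\Gamma)=\sum_{i=1}^n\rho_1\!\left(\frac{d_i(B,\Gamma)}{\hat\sigma_n}\right).$$ Let $k_n=\max_{\|v\|+\|w\|>0}\#\{i: v'x_i+w'y_i=0\}$ ($v\in\mathbb{R}^p$, $w\in\mathbb{R}^q$). If $k_n/n<0.5$, then there exists a pair $(\hat B_n,\hat\Gamma_n)$ that minimizes $S(B,\Gamma)$ over all $(B,\Gamma)\in\mathbb{R}^{p\times q}\times\mathcal{S}_q$ with $|\Gamma|=1$.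
   Context: $\mathcal{S}_q$ denotes the set of positive definite symmetric $q\times q$ matrices and $|\cdot|$ the determinant. A $\rho$-function is a continuous nondecreasing function of $|u|$ with $\rho(0)=0$, $\sup_u\rho(u)=1$, and $\rho(u)$ strictly increasing for nonnegative $u$ with $\rho(u)<1$. For $B\in\mathbb{R}^{p\times q}$, $\Sigma\in\mathcal{S}_q$, the Mahalanobis norms of the residuals are $d_i(B,\Sigma)=\big((y_i-B'x_i)'\Sigma^{-1}(y_i-B'x_i)\big)^{1/2}$. Given $v=(v_1,\dots,v_n)$, the M-scale $s(v)$ (with $\rho$-function $\rho_0$ and $b\in(0,1)$) is the value $s$ solving $\frac1n\sum_{i=1}^n\rho_0(v_i/s)=b$, or $s=0$ if $\#\{i:v_i=0\}\ge n(1-b)$. *)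

theory Defs
  imports "HOL-Analysis.Analysis"
begin

definition rho_function :: "(real \<Rightarrow> real) \<Rightarrow> bool" where
  "rho_function \<rho> \<longleftrightarrow>
     continuous_on UNIV \<rho> \<and>
     (\<forall>u. \<rho> u = \<rho> \<bar>u\<bar>) \<and>
     (\<forall>u v. 0 \<le> u \<longrightarrow> u \<le> v \<longrightarrow> \<rho> u \<le> \<rho> v) \<and>
     \<rho> 0 = 0 \<and>
     (SUP u. \<rho> u) = 1 \<and>
     (\<forall>u v. 0 \<le> u \<longrightarrow> u < v \<longrightarrow> \<rho> u < 1 \<longrightarrow> \<rho> u < \<rho> v)"

definition pd_sym :: "real^'q^'q \<Rightarrow> bool" where
  "pd_sym S \<longleftrightarrow> transpose S = S \<and> (\<forall>x. x \<noteq> 0 \<longrightarrow> x \<bullet> (S *v x) > 0)"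

definition maha :: "(nat \<Rightarrow> real^'p) \<Rightarrow> (nat \<Rightarrow> real^'q) \<Rightarrow> real^'q^'p \<Rightarrow> real^'q^'q \<Rightarrow> nat \<Rightarrow> real" where
  "maha x y B S i =
     sqrt ((y i - transpose B *v x i) \<bullet> (matrix_inv S *v (y i - transpose B *v x i)))"

definition mscale :: "(real \<Rightarrow> real) \<Rightarrow> real \<Rightarrow> nat \<Rightarrow> (nat \<Rightarrow> real) \<Rightarrow> real" where
  "mscale \<rho>0 b n v =
     (if real (card {i. i < n \<and> v i = 0}) \<ge> real n * (1 - b) then 0
      else (THE s. s > 0 \<and> (1 / real n) * (\<Sum>i<n. \<rho>0 (v i / s)) = b))"

definition kn :: "nat \<Rightarrow> (nat \<Rightarrow> real^'p) \<Rightarrow> (nat \<Rightarrow> real^'q) \<Rightarrow> nat" where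
  "kn n x y = Max {card {i. i < n \<and> v \<bullet> x i + w \<bullet> y i = 0} | v w. v \<noteq> 0 \<or> w \<noteq> 0}"

end

theory Submission
  imports Defs
begin


lemma cont_det: "continuous_on UNIV (det :: real^'n^'n \<Rightarrow> real)"
  unfolding det_def by (intro continuous_intros)

lemma quad_expand: "z \<bullet> (P *v z) = (\<Sum>i\<in>UNIV. z$i * (\<Sum>j\<in>UNIV. P$i$j * z$j))"
  for z :: "real^'n" and P :: "real^'n^'n"
  by (simp add: inner_vec_def matrix_vector_mult_def)

lemma cont_quad: "continuous_on UNIV (\<lambda>(P::real^'n^'n, z::real^'n). z \<bullet> (P *v z))"
  unfolding case_prod_unfold quad_expand by (intro continuous_intros)

lemma inv_both:
  fixes A :: "real^'n^'n"
  assumes "det A \<noteq> 0"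
  shows "A ** matrix_inv A = mat 1 \<and> matrix_inv A ** A = mat 1"
proof -
  have "invertible A" using assms invertible_det_nz by blast
  then show ?thesis unfolding matrix_inv_def invertible_def by (rule someI_ex)
qed

lemma inv_unique:
  fixes A B :: "real^'n^'n"
  assumes "A ** B = mat 1" "B ** A = mat 1"
  shows "matrix_inv A = B"
proof -
  have "invertible A" using assms unfolding invertible_def by blast
  then have "matrix_inv A ** A = mat 1" unfolding matrix_inv_def invertible_def by (rule someI2_ex) auto
  then have "matrix_inv A = matrix_inv A ** (A ** B)" using assms by (simp add: matrix_mul_rid)
  also have "\<dots> = B" by (simp add: matrix_mul_assoc \<open>matrix_inv A ** A = mat 1\<close> matrix_mul_lid)
  finally show ?thesis .
qed

lemma sym_inv:
  fixes A N :: "real^'n^'n"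
  assumes "transpose A = A" "A ** N = mat 1" "N ** A = mat 1"
  shows "transpose N = N"
proof -
  have "transpose N ** A = mat 1"
    using arg_cong[OF assms(2), of transpose] by (simp add: matrix_transpose_mul assms(1) transpose_mat)
  have "transpose N = transpose N ** (A ** N)" using assms(2) by (simp add: matrix_mul_rid)
  also have "\<dots> = N" by (simp add: matrix_mul_assoc \<open>transpose N ** A = mat 1\<close> matrix_mul_lid)
  finally show ?thesis .
qed

lemma dot_sym:
  fixes A :: "real^'n^'n"
  assumes "transpose A = A"
  shows "a \<bullet> (A *v b) = b \<bullet> (A *v a)"
proof -
  have "a \<bullet> (A *v b) = (a v* A) \<bullet> b" by (simp add: dot_lmul_matrix)
  also have "a v* A = transpose A *v a" by simp
  finally show ?thesis using assms by (simp add: inner_commute)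
qed

lemma psd_cs:
  fixes A :: "real^'n^'n"
  assumes sym: "transpose A = A" and psd: "\<forall>x. 0 \<le> x \<bullet> (A *v x)"
  shows "(a \<bullet> (A *v b))\<^sup>2 \<le> (a \<bullet> (A *v a)) * (b \<bullet> (A *v b))"
proof -
  define \<alpha> where "\<alpha> = a \<bullet> (A *v a)"
  define \<beta> where "\<beta> = a \<bullet> (A *v b)"
  define \<gamma> where "\<gamma> = b \<bullet> (A *v b)"
  have q: "0 \<le> \<alpha> + 2*t*\<beta> + t\<^sup>2*\<gamma>" for t
  proof -
    have "0 \<le> (a + t *\<^sub>R b) \<bullet> (A *v (a + t *\<^sub>R b))" using psd by blast
    also have "\<dots> = \<alpha> + t * (a \<bullet> (A *v b)) + t * (b \<bullet> (A *v a)) + t\<^sup>2 * \<gamma>"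
      unfolding \<alpha>_def \<gamma>_def
      by (simp add: matrix_vector_right_distrib matrix_vector_mult_scaleR inner_add_left inner_add_right algebra_simps power2_eq_square)
    also have "\<dots> = \<alpha> + 2*t*\<beta> + t\<^sup>2*\<gamma>" using dot_sym[OF sym, of b a] unfolding \<beta>_def by simp
    finally show ?thesis .
  qed
  have g: "0 \<le> \<gamma>" using psd \<gamma>_def by blast
  show ?thesis
  proof (cases "\<gamma> = 0")
    case True
    have "\<beta> = 0"
    proof (rule ccontr)
      assume "\<beta> \<noteq> 0"
      have "0 \<le> \<alpha> + 2*(-(\<alpha>+1)/(2*\<beta>))*\<beta>" using q[of "-(\<alpha>+1)/(2*\<beta>)"] True by simp
      also have "\<dots> = -1" using \<open>\<beta> \<noteq> 0\<close> by (simp add: field_simps)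
      finally show False by simp
    qed
    then show ?thesis using True unfolding \<beta>_def[symmetric] \<gamma>_def[symmetric] by simp
  next
    case False
    then have gp: "\<gamma> > 0" using g by simp
    have "0 \<le> \<alpha> + 2*(-\<beta>/\<gamma>)*\<beta> + (-\<beta>/\<gamma>)\<^sup>2*\<gamma>" by (rule q)
    also have "\<dots> = \<alpha> - \<beta>\<^sup>2/\<gamma>" using gp by (simp add: field_simps power2_eq_square)
    finally have "\<beta>\<^sup>2/\<gamma> \<le> \<alpha>" by simp
    then have "\<beta>\<^sup>2 \<le> \<alpha> * \<gamma>" using gp by (simp add: field_simps)
    then show ?thesis unfolding \<alpha>_def \<beta>_def \<gamma>_def .
  qed
qed



lemma inv_bound:
  fixes M N :: "real^'n^'n"
  assumes MN: "M ** N = mat 1" and c: "c > 0" and low: "\<forall>z. c * (norm z)\<^sup>2 \<le> z \<bullet> (M *v z)"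
  shows "x \<bullet> (N *v x) \<le> (norm x)\<^sup>2 / c"
proof -
  define z where "z = N *v x"
  have Mz: "M *v z = x" unfolding z_def using MN
    by (metis matrix_vector_mul_assoc matrix_vector_mul_lid)
  have e: "x \<bullet> z = z \<bullet> (M *v z)" using Mz by (simp add: inner_commute)
  have l: "c * (norm z)\<^sup>2 \<le> x \<bullet> z" using e low by simp
  have u: "x \<bullet> z \<le> norm x * norm z" by (rule norm_cauchy_schwarz)
  show ?thesis
  proof (cases "z = 0")
    case True then show ?thesis using z_def c by (simp add: less_imp_le)
  next
    case False
    then have nz: "norm z > 0" by simp
    have "c * norm z * norm z \<le> norm x * norm z" using l u by (simp add: power2_eq_square mult.assoc)
    then have "c * norm z \<le> norm x" using nz by simp
    then have "norm z \<le> norm x / c" using c by (simp add: field_simps)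
    then have "norm x * norm z \<le> norm x * (norm x / c)" by (rule mult_left_mono) simp
    then show ?thesis using u z_def by (simp add: power2_eq_square)
  qed
qed

lemma entry_eq: "axis i 1 \<bullet> (A *v axis j 1) = (A :: real^'n^'m)$i$j"
  by (simp add: inner_axis' matrix_vector_mul_component inner_axis)

lemma entries_bound:
  fixes A :: "real^'n^'n"
  assumes sym: "transpose A = A" and psd: "\<forall>x. 0 \<le> x \<bullet> (A *v x)"
    and up: "\<forall>x. x \<bullet> (A *v x) \<le> C * (norm x)\<^sup>2"
  shows "\<bar>A$i$j\<bar> \<le> C"
proof -
  have "(A$i$j)\<^sup>2 \<le> (axis i 1 \<bullet> (A *v axis i 1)) * (axis j 1 \<bullet> (A *v axis j 1))"
    using psd_cs[OF sym psd, of "axis i 1" "axis j 1"] by (simp add: entry_eq)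
  also have "\<dots> \<le> C * C"
  proof (rule mult_mono)
    show "axis i 1 \<bullet> (A *v axis i 1) \<le> C" using up[rule_format, of "axis i 1"] by simp
    show "axis j 1 \<bullet> (A *v axis j 1) \<le> C" using up[rule_format, of "axis j 1"] by simp
    show "0 \<le> C" using psd up[rule_format, of "axis i 1"] by (metis norm_axis_1 power_one mult_1_right order_trans)
    show "0 \<le> axis j 1 \<bullet> (A *v axis j 1)" using psd by blast
  qed
  finally have "(A$i$j)\<^sup>2 \<le> C\<^sup>2" by (simp add: power2_eq_square)
  moreover have "0 \<le> C" using psd up[rule_format, of "axis i 1"] by (metis norm_axis_1 power_one mult_1_right order_trans)
  ultimately show ?thesis using abs_le_square_iff by (metis abs_of_nonneg)
qed

lemma norm_entries:
  fixes A :: "real^'n^'m"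
  assumes "\<forall>i j. \<bar>A$i$j\<bar> \<le> R"
  shows "norm A \<le> real CARD('m) * real CARD('n) * R"
proof -
  have "norm A \<le> (\<Sum>i\<in>UNIV. \<bar>norm (A$i)\<bar>)" by (simp add: norm_vec_def L2_set_le_sum)
  also have "\<dots> \<le> (\<Sum>i\<in>(UNIV::'m set). real CARD('n) * R)"
  proof (rule sum_mono)
    fix i
    have "norm (A$i) \<le> (\<Sum>j\<in>UNIV. \<bar>A$i$j\<bar>)" by (rule norm_le_l1_cart)
    also have "\<dots> \<le> (\<Sum>j\<in>(UNIV::'n set). R)" using assms by (intro sum_mono) auto
    finally show "\<bar>norm (A$i)\<bar> \<le> real CARD('n) * R" by simp
  qed
  finally show ?thesis by simp
qed

lemma psd_pos:
  fixes P :: "real^'n^'n"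
  assumes sym: "transpose P = P" and psd: "\<forall>x. 0 \<le> x \<bullet> (P *v x)" and d: "det P \<noteq> 0"
    and x: "x \<noteq> 0"
  shows "0 < x \<bullet> (P *v x)"
proof (rule ccontr)
  assume "\<not> 0 < x \<bullet> (P *v x)"
  then have z: "x \<bullet> (P *v x) = 0" using psd[rule_format, of x] by linarith
  have "(y \<bullet> (P *v x))\<^sup>2 \<le> 0" for y using psd_cs[OF sym psd, of y x] z by simp
  then have "(P *v x) \<bullet> (P *v x) = 0" by (metis power2_le_imp_le power2_eq_square inner_ge_zero order_antisym power2_less_eq_zero_iff)
  then have "P *v x = 0" by simp
  moreover have "inj ((*v) P)" using d invertible_det_nz inj_matrix_vector_mult by blast
  ultimately show False using x by (metis injD matrix_vector_mult_0_right)
qed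



lemma sym_iff: "transpose P = P \<longleftrightarrow> (\<forall>i j. P$i$j = P$j$i)" for P :: "real^'n^'n"
  by (auto simp: vec_eq_iff transpose_def)

definition K0 :: "real \<Rightarrow> (real^'n^'n) set" where
  "K0 R = {P. (\<forall>i j. P$i$j = P$j$i) \<and> (\<forall>x. 0 \<le> x \<bullet> (P *v x)) \<and> det P = 1 \<and> (\<forall>i j. \<bar>P$i$j\<bar> \<le> R)}"

definition KB :: "real \<Rightarrow> (real^'n^'m) set" where
  "KB R = {B. \<forall>i j. \<bar>B$i$j\<bar> \<le> R}"

lemma compact_KB: "compact (KB R)"
proof -
  have "closed (KB R)" unfolding KB_def
    by (intro closed_Collect_all closed_Collect_le continuous_intros)
  moreover have "bounded (KB R)" unfolding bounded_iff KB_def using norm_entries by blast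
  ultimately show ?thesis using compact_eq_bounded_closed by blast
qed

lemma compact_K0: "compact (K0 R)"
proof -
  have "closed (K0 R)" unfolding K0_def quad_expand
    by (intro closed_Collect_all closed_Collect_le closed_Collect_conj closed_Collect_eq continuous_intros cont_det)
  moreover have "bounded (K0 R)" unfolding bounded_iff K0_def using norm_entries by blast
  ultimately show ?thesis using compact_eq_bounded_closed by blast
qed

lemma K0_lower:
  fixes R :: real
  shows "\<exists>c>0. \<forall>P\<in>K0 R. \<forall>z::real^'n. c*(norm z)\<^sup>2 \<le> z \<bullet> (P *v z)"
proof (cases "\<exists>P::real^'n^'n. P \<in> K0 R")
  case False then show ?thesis by (intro exI[of _ 1]) auto
next
  case True
  then obtain P1 :: "real^'n^'n" where P1: "P1 \<in> K0 R" by blast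
  define S where "S = (K0 R :: (real^'n^'n) set) \<times> sphere (0::real^'n) 1"
  define g where "g = (\<lambda>q::(real^'n^'n) \<times> (real^'n). snd q \<bullet> (fst q *v snd q))"
  have cS: "compact S" unfolding S_def using compact_K0 compact_sphere by (rule compact_Times)
  have "(P1, axis undefined 1) \<in> S" using P1 unfolding S_def by simp
  then have ne: "S \<noteq> {}" by blast
  have cg: "continuous_on S g" unfolding g_def quad_expand by (intro continuous_intros)
  obtain p where p: "p \<in> S" and pm: "\<forall>q\<in>S. g p \<le> g q"
    using continuous_attains_inf[OF cS ne cg] by blast
  obtain P0 z0 where pz: "p = (P0, z0)" by (cases p)
  have P0: "P0 \<in> K0 R" and z0: "norm z0 = 1" using p pz unfolding S_def by auto
  define c where "c = z0 \<bullet> (P0 *v z0)"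
  have P0': "transpose P0 = P0" "\<forall>x. 0 \<le> x \<bullet> (P0 *v x)" "det P0 \<noteq> 0"
    using P0 unfolding K0_def sym_iff by auto
  have "z0 \<noteq> 0" using z0 by auto
  then have cpos: "c > 0" unfolding c_def by (rule psd_pos[OF P0'])
  have "c*(norm z)\<^sup>2 \<le> z \<bullet> (P *v z)" if P: "P \<in> K0 R" for P and z :: "real^'n"
  proof (cases "z = 0")
    case True then show ?thesis by simp
  next
    case False
    define u where "u = z /\<^sub>R norm z"
    have "norm u = 1" using False u_def by simp
    then have "(P, u) \<in> S" using P unfolding S_def by simp
    then have "g p \<le> g (P, u)" using pm by blast
    then have "c \<le> u \<bullet> (P *v u)" unfolding c_def g_def pz by simp
    also have "u \<bullet> (P *v u) = (z \<bullet> (P *v z)) / (norm z)\<^sup>2"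
      unfolding u_def by (simp add: matrix_vector_mult_scaleR power2_eq_square divide_inverse)
    finally show ?thesis using False by (simp add: field_simps)
  qed
  then show ?thesis using cpos by blast
qed

lemma kn_ge:
  assumes "v \<noteq> 0 \<or> w \<noteq> 0"
  shows "card {i. i < n \<and> v \<bullet> x i + w \<bullet> y i = 0} \<le> kn n x y"
  unfolding kn_def
proof (rule Max_ge)
  have "{card {i. i < n \<and> v \<bullet> x i + w \<bullet> y i = 0} |v w. v \<noteq> 0 \<or> w \<noteq> 0} \<subseteq> {..n}"
  proof
    fix k assume "k \<in> {card {i. i < n \<and> v \<bullet> x i + w \<bullet> y i = 0} |v w. v \<noteq> 0 \<or> w \<noteq> 0}"
    then obtain v w where "k = card {i. i < n \<and> v \<bullet> x i + w \<bullet> y i = 0}" by blast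
    moreover have "card {i. i < n \<and> v \<bullet> x i + w \<bullet> y i = 0} \<le> card {..<n}"
      by (rule card_mono) auto
    ultimately show "k \<in> {..n}" by simp
  qed
  then show "finite {card {i. i < n \<and> v \<bullet> x i + w \<bullet> y i = 0} |v w. v \<noteq> 0 \<or> w \<noteq> 0}"
    using finite_subset by blast
  show "card {i. i < n \<and> v \<bullet> x i + w \<bullet> y i = 0} \<in> {card {i. i < n \<and> v \<bullet> x i + w \<bullet> y i = 0} |v w. v \<noteq> 0 \<or> w \<noteq> 0}"
    using assms by blast
qed



lemma eps_lemma:
  fixes x :: "nat \<Rightarrow> real^'p" and y :: "nat \<Rightarrow> real^'q"
  shows "\<exists>\<epsilon>>0. \<forall>v w. card {i. i < n \<and> \<bar>v \<bullet> x i + w \<bullet> y i\<bar> < \<epsilon> * norm (v, w)} \<le> kn n x y"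
proof -
  define k where "k = kn n x y"
  define \<A> where "\<A> = {A. A \<subseteq> {..<n} \<and> card A = Suc k}"
  define h where "h = (\<lambda>A (z::(real^'p) \<times> (real^'q)). \<Sum>i\<in>A. \<bar>fst z \<bullet> x i + snd z \<bullet> y i\<bar>)"
  define Sph where "Sph = sphere (0::(real^'p) \<times> (real^'q)) 1"
  have finA: "finite \<A>" unfolding \<A>_def by (rule finite_subset[of _ "Pow {..<n}"]) auto
  have "\<exists>m>0. \<forall>z\<in>Sph. m \<le> h A z" if A: "A \<in> \<A>" for A
  proof -
    have fA: "finite A" using A unfolding \<A>_def using finite_subset by blast
    have "compact Sph" unfolding Sph_def by simp
    moreover have "(0, axis undefined 1) \<in> Sph" unfolding Sph_def by (simp add: norm_Pair)
    then have "Sph \<noteq> {}" by blast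
    moreover have "continuous_on Sph (h A)" unfolding h_def by (intro continuous_intros)
    ultimately obtain z0 where z0: "z0 \<in> Sph" and zm: "\<forall>z\<in>Sph. h A z0 \<le> h A z"
      using continuous_attains_inf by blast
    have "h A z0 > 0"
    proof (rule ccontr)
      assume "\<not> h A z0 > 0"
      moreover have "h A z0 \<ge> 0" unfolding h_def by (simp add: sum_nonneg)
      ultimately have "h A z0 = 0" by simp
      then have zero: "\<forall>i\<in>A. fst z0 \<bullet> x i + snd z0 \<bullet> y i = 0"
        unfolding h_def using sum_nonneg_eq_0_iff[OF fA, of "\<lambda>i. \<bar>fst z0 \<bullet> x i + snd z0 \<bullet> y i\<bar>"] by simp
      have "fst z0 \<noteq> 0 \<or> snd z0 \<noteq> 0"
      proof (rule ccontr)
        assume "\<not> (fst z0 \<noteq> 0 \<or> snd z0 \<noteq> 0)"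
        then have "z0 = 0" by (simp add: prod_eq_iff)
        then show False using z0 unfolding Sph_def by simp
      qed
      then have le: "card {i. i < n \<and> fst z0 \<bullet> x i + snd z0 \<bullet> y i = 0} \<le> k"
        unfolding k_def by (rule kn_ge)
      have "A \<subseteq> {i. i < n \<and> fst z0 \<bullet> x i + snd z0 \<bullet> y i = 0}" using zero A unfolding \<A>_def by auto
      then have "card A \<le> card {i. i < n \<and> fst z0 \<bullet> x i + snd z0 \<bullet> y i = 0}"
        by (rule card_mono[rotated]) simp
      then show False using le A unfolding \<A>_def by simp
    qed
    then show ?thesis using zm by blast
  qed
  then obtain m where m: "\<forall>A\<in>\<A>. m A > 0 \<and> (\<forall>z\<in>Sph. m A \<le> h A z)" by metis
  define \<epsilon> where "\<epsilon> = Min (insert 1 (m ` \<A>)) / real (Suc k)"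
  have minpos: "Min (insert 1 (m ` \<A>)) > 0" using finA m by (simp add: Min_gr_iff)
  then have epos: "\<epsilon> > 0" unfolding \<epsilon>_def by simp
  have "card {i. i < n \<and> \<bar>v \<bullet> x i + w \<bullet> y i\<bar> < \<epsilon> * norm (v, w)} \<le> k" for v w
  proof (rule ccontr)
    define E where "E = {i. i < n \<and> \<bar>v \<bullet> x i + w \<bullet> y i\<bar> < \<epsilon> * norm (v, w)}"
    assume "\<not> card {i. i < n \<and> \<bar>v \<bullet> x i + w \<bullet> y i\<bar> < \<epsilon> * norm (v, w)} \<le> k"
    then have "Suc k \<le> card E" unfolding E_def by simp
    then obtain A where AE: "A \<subseteq> E" and cA: "card A = Suc k" and fA: "finite A"
      by (rule obtain_subset_with_card_n)
    have AA: "A \<in> \<A>" using AE cA unfolding \<A>_def E_def by auto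
    define N where "N = norm (v, w)"
    have Npos: "N > 0"
    proof -
      have "E \<noteq> {}" using \<open>Suc k \<le> card E\<close> by auto
      then obtain i where "\<bar>v \<bullet> x i + w \<bullet> y i\<bar> < \<epsilon> * N" unfolding E_def N_def by auto
      then have "0 < \<epsilon> * N" by linarith
      then show ?thesis using epos by (simp add: zero_less_mult_iff)
    qed
    define z where "z = (v /\<^sub>R N, w /\<^sub>R N)"
    have zeq: "z = (1/N) *\<^sub>R (v, w)" unfolding z_def by (simp add: inverse_eq_divide)
    have "norm z = \<bar>1/N\<bar> * norm (v, w)" unfolding zeq by (rule norm_scaleR)
    then have "norm z = 1" using Npos unfolding N_def by simp
    then have zS: "z \<in> Sph" unfolding Sph_def by simp
    have "h A z = (\<Sum>i\<in>A. \<bar>v \<bullet> x i + w \<bullet> y i\<bar> / N)"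
      unfolding h_def
    proof (intro sum.cong refl)
      fix i
      have "inverse N * (v \<bullet> x i) + inverse N * (w \<bullet> y i) = (v \<bullet> x i + w \<bullet> y i) / N"
        by (simp add: divide_inverse_commute distrib_left)
      then show "\<bar>fst z \<bullet> x i + snd z \<bullet> y i\<bar> = \<bar>v \<bullet> x i + w \<bullet> y i\<bar> / N"
        unfolding z_def using Npos by (simp add: abs_divide)
    qed
    also have "\<dots> < real (card A) * \<epsilon>"
    proof (rule sum_bounded_above_strict)
      fix i assume "i \<in> A"
      then have "\<bar>v \<bullet> x i + w \<bullet> y i\<bar> < \<epsilon> * N" using AE unfolding E_def N_def by auto
      then show "\<bar>v \<bullet> x i + w \<bullet> y i\<bar> / N < \<epsilon>" using Npos by (simp add: field_simps)
    next
      show "card A > 0" using cA by simp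
    qed
    also have "\<dots> = Min (insert 1 (m ` \<A>))" unfolding \<epsilon>_def cA by simp
    also have "\<dots> \<le> m A" using finA AA by simp
    also have "\<dots> \<le> h A z" using m AA zS by blast
    finally show False by simp
  qed
  note main = this
  show ?thesis
  proof (intro exI[of _ \<epsilon>] conjI allI)
    show "\<epsilon> > 0" by (rule epos)
    fix v w
    show "card {i. i < n \<and> \<bar>v \<bullet> x i + w \<bullet> y i\<bar> < \<epsilon> * norm (v, w)} \<le> kn n x y"
      using main[of v w] unfolding k_def .
  qed
qed



lemma rho_mono:
  assumes "rho_function \<rho>" "\<bar>s\<bar> \<le> \<bar>t\<bar>" shows "\<rho> s \<le> \<rho> t"
proof -
  have m: "\<forall>u v. 0 \<le> u \<longrightarrow> u \<le> v \<longrightarrow> \<rho> u \<le> \<rho> v" "\<forall>u. \<rho> u = \<rho> \<bar>u\<bar>"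
    using assms(1) unfolding rho_function_def by blast+
  have "\<rho> \<bar>s\<bar> \<le> \<rho> \<bar>t\<bar>" using m(1) assms(2) by simp
  then show ?thesis using m(2) by metis
qed

lemma rho_abs: "rho_function \<rho> \<Longrightarrow> \<rho> t = \<rho> \<bar>t\<bar>"
  unfolding rho_function_def by blast

lemma rho_strict: "rho_function \<rho> \<Longrightarrow> 0 \<le> u \<Longrightarrow> u < w \<Longrightarrow> \<rho> u < 1 \<Longrightarrow> \<rho> u < \<rho> w"
  unfolding rho_function_def by blast

lemma rho_nonneg:
  assumes "rho_function \<rho>" shows "0 \<le> \<rho> t"
proof -
  have "\<rho> 0 = 0" using assms unfolding rho_function_def by blast
  moreover have "\<rho> 0 \<le> \<rho> t" by (rule rho_mono[OF assms]) simp
  ultimately show ?thesis by simp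
qed

lemma rho_cont: "rho_function \<rho> \<Longrightarrow> continuous_on UNIV \<rho>"
  unfolding rho_function_def by blast

lemma rho_big:
  assumes rho: "rho_function \<rho>" and a: "a < 1"
  shows "\<exists>u>0. \<forall>t. u \<le> \<bar>t\<bar> \<longrightarrow> a < \<rho> t"
proof -
  have "\<exists>u. a < \<rho> u"
  proof (cases "bdd_above (range \<rho>)")
    case True
    have "(SUP u. \<rho> u) = 1" using rho unfolding rho_function_def by blast
    then have "a < (SUP u. \<rho> u)" using a by simp
    then show ?thesis using less_cSUP_iff[OF _ True] by blast
  next
    case False
    then obtain x where "x \<in> range \<rho>" "\<not> x \<le> a" unfolding bdd_above_def by blast
    then show ?thesis by (metis not_le rangeE)
  qed
  then obtain u0 where u0: "a < \<rho> u0" by blast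
  have "a < \<rho> t" if "\<bar>u0\<bar> + 1 \<le> \<bar>t\<bar>" for t
  proof -
    have "\<rho> u0 \<le> \<rho> t" using rho_mono[OF rho, of u0 t] that by simp
    then show ?thesis using u0 by simp
  qed
  moreover have "\<bar>u0\<bar> + 1 > 0" by simp
  ultimately show ?thesis by blast
qed

lemma rho_small:
  assumes rho: "rho_function \<rho>" and e: "e > 0"
  shows "\<exists>\<eta>>0. \<forall>t. \<bar>t\<bar> < \<eta> \<longrightarrow> \<rho> t < e"
proof -
  have c: "continuous_on UNIV \<rho>" by (rule rho_cont[OF rho])
  have r0: "\<rho> 0 = 0" using rho unfolding rho_function_def by blast
  obtain d where d: "d > 0" "\<forall>x'. dist x' 0 < d \<longrightarrow> dist (\<rho> x') (\<rho> 0) < e"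
    using c e unfolding continuous_on_iff by (meson UNIV_I)
  have "\<rho> t < e" if "\<bar>t\<bar> < d" for t
    using d(2)[rule_format, of t] that r0 by (simp add: dist_real_def)
  then show ?thesis using d(1) by blast
qed

lemma mscale_prop:
  fixes v :: "nat \<Rightarrow> real"
  assumes rho: "rho_function \<rho>" and n: "n > 0"
    and nz: "\<not> real (card {i. i < n \<and> v i = 0}) \<ge> real n * (1 - 1/2)"
  shows "mscale \<rho> (1/2) n v > 0 \<and> (\<Sum>i<n. \<rho> (v i / mscale \<rho> (1/2) n v)) = real n / 2"
proof -
  define Z where "Z = {i. i < n \<and> v i \<noteq> 0}"
  define N where "N = card Z"
  have finZ: "finite Z" unfolding Z_def by simp
  have "{i. i < n \<and> v i = 0} \<union> Z = {..<n}" "{i. i < n \<and> v i = 0} \<inter> Z = {}" unfolding Z_def by auto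
  then have "card {i. i < n \<and> v i = 0} + N = n" unfolding N_def
    by (metis card_Un_disjoint card_lessThan finZ finite_Collect_conjI finite_Collect_less_nat)
  then have "real (card {i. i < n \<and> v i = 0}) + real N = real n" by (metis of_nat_add)
  moreover have "real n * (1 - 1/2) = real n / 2" by simp
  ultimately have N2: "real n < 2 * real N" using nz by linarith
  then have Zne: "Z \<noteq> {}" unfolding N_def by auto
  have ZS: "Z \<subseteq> {..<n}" unfolding Z_def by auto
  define F where "F = (\<lambda>s. \<Sum>i<n. \<rho> (v i / s))"
  have Fge: "F s \<ge> (\<Sum>i\<in>Z. \<rho> (v i / s))" for s
    unfolding F_def by (rule sum_mono2) (use ZS rho_nonneg[OF rho] in auto)
  have exist: "\<exists>s>0. F s = real n / 2"
  proof -
    define a where "a = real n / (2 * real N)"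
    have Npos: "real N > 0" using N2 n by linarith
    have a1: "a < 1" unfolding a_def using N2 Npos by (simp add: field_simps)
    obtain u0 where u0: "u0 > 0" "\<forall>t. u0 \<le> \<bar>t\<bar> \<longrightarrow> a < \<rho> t" using rho_big[OF rho a1] by blast
    define m where "m = Min ((\<lambda>i. \<bar>v i\<bar>) ` Z)"
    have mpos: "m > 0" unfolding m_def using finZ Zne by (simp add: Z_def)
    have mle: "m \<le> \<bar>v i\<bar>" if "i \<in> Z" for i unfolding m_def using finZ that by simp
    define s0 where "s0 = m / u0"
    have s0: "s0 > 0" unfolding s0_def using mpos u0 by simp
    have "a < \<rho> (v i / s0)" if "i \<in> Z" for i
    proof -
      have "\<bar>v i / s0\<bar> = \<bar>v i\<bar> * u0 / m" unfolding s0_def using mpos u0 by (simp add: abs_divide abs_mult)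
      also have "\<dots> \<ge> u0"
      proof -
        have "m * u0 \<le> \<bar>v i\<bar> * u0" using mle[OF that] u0 by (simp add: mult_right_mono)
        then show ?thesis using mpos by (simp add: field_simps)
      qed
      finally have "u0 \<le> \<bar>v i / s0\<bar>" .
      then show ?thesis using u0 by blast
    qed
    then have "(\<Sum>i\<in>Z. a) < (\<Sum>i\<in>Z. \<rho> (v i / s0))" by (intro sum_strict_mono finZ Zne) auto
    moreover have "(\<Sum>i\<in>Z. a) = real n / 2" unfolding a_def using Npos by (simp add: N_def)
    ultimately have F0: "F s0 > real n / 2" using Fge[of s0] by linarith
    obtain \<eta> where eta: "\<eta> > 0" "\<forall>t. \<bar>t\<bar> < \<eta> \<longrightarrow> \<rho> t < 1/2" using rho_small[OF rho, of "1/2"] by auto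
    define M where "M = (\<Sum>i<n. \<bar>v i\<bar>) + 1"
    have Mgt: "\<bar>v i\<bar> < M" if "i < n" for i
    proof -
      have "\<bar>v i\<bar> \<le> (\<Sum>i<n. \<bar>v i\<bar>)" using that by (intro member_le_sum) auto
      then show ?thesis unfolding M_def by simp
    qed
    have Mpos: "M > 0" unfolding M_def by (simp add: sum_nonneg add_nonneg_pos)
    define s1 where "s1 = M / \<eta>"
    have s1: "s1 > 0" unfolding s1_def using Mpos eta by simp
    have "\<rho> (v i / s1) < 1/2" if "i < n" for i
    proof -
      have "\<bar>v i / s1\<bar> = \<bar>v i\<bar> * \<eta> / M" unfolding s1_def using Mpos eta by (simp add: abs_divide abs_mult)
      also have "\<dots> < \<eta>"
      proof -
        have "\<bar>v i\<bar> * \<eta> < M * \<eta>" using Mgt[OF that] eta by simp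
        then show ?thesis using Mpos by (simp add: field_simps)
      qed
      finally have "\<bar>v i / s1\<bar> < \<eta>" .
      then show ?thesis using eta by blast
    qed
    then have "F s1 < (\<Sum>i<n. 1/2)" unfolding F_def using n by (intro sum_strict_mono) auto
    then have F1: "F s1 < real n / 2" by simp
    have cont: "continuous_on {a'..b'} F" if "a' > 0" for a' b'
      unfolding F_def
    proof (intro continuous_on_sum)
      fix i
      have "continuous_on {a'..b'} (\<lambda>s. v i / s)" using that by (intro continuous_intros) auto
      then show "continuous_on {a'..b'} (\<lambda>s. \<rho> (v i / s))"
        using continuous_on_compose2[OF rho_cont[OF rho]] by blast
    qed
    show ?thesis
    proof (cases "s0 \<le> s1")
      case True
      then obtain s where "s0 \<le> s" "s \<le> s1" "F s = real n / 2"
        using IVT2'[of F s1 "real n / 2" s0] F0 F1 cont[OF s0] by auto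
      moreover have "s > 0" using s0 \<open>s0 \<le> s\<close> by linarith
      ultimately show ?thesis by blast
    next
      case False
      then obtain s where "s1 \<le> s" "s \<le> s0" "F s = real n / 2"
        using IVT'[of F s1 "real n / 2" s0] F0 F1 cont[OF s1] by auto
      moreover have "s > 0" using s1 \<open>s1 \<le> s\<close> by linarith
      ultimately show ?thesis by blast
    qed
  qed
  have uniq: "s1 = s2" if s1: "s1 > 0" "F s1 = real n / 2" and s2: "s2 > 0" "F s2 = real n / 2" for s1 s2
  proof -
    have lt: False if "t1 < t2" "t1 > 0" "F t1 = real n / 2" "F t2 = real n / 2" for t1 t2
    proof -
      have mono: "\<rho> (v i / t2) \<le> \<rho> (v i / t1)" for i
        using that by (intro rho_mono[OF rho]) (simp add: abs_divide divide_left_mono)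
      show False
      proof (cases "\<exists>i\<in>Z. \<rho> (v i / t2) < 1")
        case True
        then obtain i where i: "i \<in> Z" "\<rho> (v i / t2) < 1" by blast
        have e1: "\<rho> (v i / t2) = \<rho> (\<bar>v i\<bar> / t2)" "\<rho> (v i / t1) = \<rho> (\<bar>v i\<bar> / t1)"
          using rho_abs[OF rho, of "v i / t2"] rho_abs[OF rho, of "v i / t1"] that
          by (simp_all add: abs_divide)
        have "\<bar>v i\<bar> / t2 < \<bar>v i\<bar> / t1" using i that unfolding Z_def by (simp add: divide_strict_left_mono)
        moreover have "0 \<le> \<bar>v i\<bar> / t2" using that by simp
        moreover have "\<rho> (\<bar>v i\<bar> / t2) < 1" using i(2) e1 by simp
        ultimately have "\<rho> (\<bar>v i\<bar> / t2) < \<rho> (\<bar>v i\<bar> / t1)" using rho_strict[OF rho] by blast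
        then have "\<rho> (v i / t2) < \<rho> (v i / t1)" using e1 by simp
        then have "F t2 < F t1" unfolding F_def using i ZS mono
          by (intro sum_strict_mono_ex1) auto
        then show False using that by simp
      next
        case False
        then have "(\<Sum>i\<in>Z. 1) \<le> (\<Sum>i\<in>Z. \<rho> (v i / t2))" by (intro sum_mono) auto
        then have "real N \<le> F t2" using Fge[of t2] unfolding N_def by simp
        then show False using that N2 by simp
      qed
    qed
    show ?thesis
    proof (cases s1 s2 rule: linorder_cases)
      case less then show ?thesis using lt[of s1 s2] s1 s2 by blast
    next
      case equal then show ?thesis .
    next
      case greater then show ?thesis using lt[of s2 s1] s1 s2 by blast
    qed
  qed
  have ex1: "\<exists>!s. s > 0 \<and> (1 / real n) * (\<Sum>i<n. \<rho> (v i / s)) = 1/2"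
  proof -
    have iff: "(1 / real n) * (\<Sum>i<n. \<rho> (v i / s)) = 1/2 \<longleftrightarrow> F s = real n / 2" for s
      unfolding F_def using n by (auto simp: field_simps)
    show ?thesis unfolding iff using exist uniq by blast
  qed
  have ms: "mscale \<rho> (1/2) n v = (THE s. s > 0 \<and> (1 / real n) * (\<Sum>i<n. \<rho> (v i / s)) = 1/2)"
    unfolding mscale_def using nz by simp
  have "mscale \<rho> (1/2) n v > 0 \<and> (1 / real n) * (\<Sum>i<n. \<rho> (v i / mscale \<rho> (1/2) n v)) = 1/2"
    unfolding ms by (rule theI'[OF ex1])
  then show ?thesis using n by (auto simp: field_simps)
qed



lemma cont_f:
  fixes x :: "nat \<Rightarrow> real^'p" and y :: "nat \<Rightarrow> real^'q"
    and \<rho> :: "real \<Rightarrow> real"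
  assumes "continuous_on UNIV \<rho>" and sig: "\<sigma> \<noteq> 0"
  shows "continuous_on UNIV (\<lambda>q::(real^'q^'p) \<times> (real^'q^'q). \<Sum>i<n. \<rho> (sqrt ((y i - transpose (fst q) *v x i) \<bullet> (snd q *v (y i - transpose (fst q) *v x i))) / \<sigma>))"
proof (rule continuous_on_sum)
  fix i assume "i \<in> {..<n}"
  have "continuous_on UNIV (\<lambda>q::(real^'q^'p) \<times> (real^'q^'q). sqrt ((y i - transpose (fst q) *v x i) \<bullet> (snd q *v (y i - transpose (fst q) *v x i))) / \<sigma>)"
    unfolding matrix_vector_mult_def transpose_def by (intro continuous_intros) (simp add: sig)
  then show "continuous_on UNIV (\<lambda>q::(real^'q^'p) \<times> (real^'q^'q). \<rho> (sqrt ((y i - transpose (fst q) *v x i) \<bullet> (snd q *v (y i - transpose (fst q) *v x i))) / \<sigma>))"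
    using continuous_on_compose2[OF assms(1)] by blast
qed

lemma dot_transpose: "w \<bullet> (transpose B *v z) = (B *v w) \<bullet> (z::real^'p)" for B :: "real^'q^'p"
proof -
  have "w \<bullet> (transpose B *v z) = (z v* B) \<bullet> w" by (simp add: inner_commute)
  also have "\<dots> = z \<bullet> (B *v w)" by (rule dot_lmul_matrix)
  finally show ?thesis by (simp add: inner_commute)
qed

lemma cs_inv:
  fixes G P :: "real^'n^'n"
  assumes sym: "transpose G = G" and psd: "\<forall>x. 0 \<le> x \<bullet> (G *v x)" and GP: "G ** P = mat 1"
  shows "(w \<bullet> r)\<^sup>2 \<le> (w \<bullet> (G *v w)) * (r \<bullet> (P *v r))"
proof -
  define u where "u = P *v r"
  have Gu: "G *v u = r" unfolding u_def using GP by (metis matrix_vector_mul_assoc matrix_vector_mul_lid)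
  have "(w \<bullet> (G *v u))\<^sup>2 \<le> (w \<bullet> (G *v w)) * (u \<bullet> (G *v u))" by (rule psd_cs[OF sym psd])
  then show ?thesis unfolding Gu unfolding u_def by (simp add: inner_commute)
qed

lemma pd_inv_facts:
  fixes G :: "real^'n^'n"
  assumes pd: "pd_sym G" and d: "det G = 1"
  shows "G ** matrix_inv G = mat 1" "matrix_inv G ** G = mat 1"
    "transpose (matrix_inv G) = matrix_inv G" "\<forall>x. 0 \<le> x \<bullet> (matrix_inv G *v x)"
    "det (matrix_inv G) = 1" "transpose G = G" "\<forall>x. 0 \<le> x \<bullet> (G *v x)"
proof -
  show GP: "G ** matrix_inv G = mat 1" and PG: "matrix_inv G ** G = mat 1" using inv_both[of G] d by auto
  show sG: "transpose G = G" using pd unfolding pd_sym_def by blast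
  show psdG: "\<forall>x. 0 \<le> x \<bullet> (G *v x)"
  proof
    fix x show "0 \<le> x \<bullet> (G *v x)" using pd unfolding pd_sym_def by (cases "x = 0") (auto intro: less_imp_le)
  qed
  show "transpose (matrix_inv G) = matrix_inv G" by (rule sym_inv[OF sG GP PG])
  show "\<forall>x. 0 \<le> x \<bullet> (matrix_inv G *v x)"
  proof
    fix x
    define z where "z = matrix_inv G *v x"
    have "G *v z = x" unfolding z_def using GP by (metis matrix_vector_mul_assoc matrix_vector_mul_lid)
    then have "x \<bullet> (matrix_inv G *v x) = z \<bullet> (G *v z)" unfolding z_def by (simp add: inner_commute)
    then show "0 \<le> x \<bullet> (matrix_inv G *v x)" using psdG by simp
  qed
  have "det (G ** matrix_inv G) = 1" using GP by simp
  then show "det (matrix_inv G) = 1" using d by (simp add: det_mul)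
qed



theorem theorem1:
  fixes n :: nat
    and x :: "nat \<Rightarrow> real^'p" and y :: "nat \<Rightarrow> real^'q"
    and B0 :: "real^'q^'p" and u :: "nat \<Rightarrow> real^'q"
    and \<rho>0 \<rho>1 :: "real \<Rightarrow> real"
    and Bt :: "real^'q^'p" and St :: "real^'q^'q"
  assumes model: "\<forall>i<n. y i = transpose B0 *v x i + u i"
    and rho0: "rho_function \<rho>0" and rho1: "rho_function \<rho>1"
    and le: "\<forall>t. \<rho>1 t \<le> \<rho>0 t"
    and St_pd: "pd_sym St" and St_det: "det St = 1"
    and kn_small: "real (kn n x y) / real n < 1/2"
  shows "let \<sigma> = mscale \<rho>0 (1/2) n (maha x y Bt St);
             S = (\<lambda>B \<Gamma>. \<Sum>i<n. \<rho>1 (maha x y B \<Gamma> i / \<sigma>))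
         in \<exists>Bh \<Gamma>h. pd_sym \<Gamma>h \<and> det \<Gamma>h = 1 \<and>
              (\<forall>B \<Gamma>. pd_sym \<Gamma> \<and> det \<Gamma> = 1 \<longrightarrow> S Bh \<Gamma>h \<le> S B \<Gamma>)"
proof -
  define \<sigma> where "\<sigma> = mscale \<rho>0 (1/2) n (maha x y Bt St)"
  define S where "S = (\<lambda>(B::real^'q^'p) (\<Gamma>::real^'q^'q). \<Sum>i<n. \<rho>1 (maha x y B \<Gamma> i / \<sigma>))"
  have r10: "\<rho>1 0 = 0" using rho1 unfolding rho_function_def by blast
  have goal: "\<exists>Bh \<Gamma>h. pd_sym \<Gamma>h \<and> det \<Gamma>h = 1 \<and> (\<forall>B \<Gamma>. pd_sym \<Gamma> \<and> det \<Gamma> = 1 \<longrightarrow> S Bh \<Gamma>h \<le> S B \<Gamma>)"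
  proof (cases "n = 0 \<or> \<sigma> = 0")
    case True
    have S0: "S B \<Gamma> = 0" for B \<Gamma> unfolding S_def using True r10 by auto
    have "pd_sym (mat 1 :: real^'q^'q)" unfolding pd_sym_def by (simp add: transpose_mat)
    moreover have "det (mat 1 :: real^'q^'q) = 1" by simp
    ultimately show ?thesis using S0 by (intro exI[of _ "0::real^'q^'p"] exI[of _ "mat 1 :: real^'q^'q"]) simp
  next
    case False
    then have n: "n > 0" and sig0: "\<sigma> \<noteq> 0" by auto
    have nz: "\<not> real (card {i. i < n \<and> maha x y Bt St i = 0}) \<ge> real n * (1 - 1/2)"
    proof
      assume "real (card {i. i < n \<and> maha x y Bt St i = 0}) \<ge> real n * (1 - 1/2)"
      then have "\<sigma> = 0" unfolding \<sigma>_def mscale_def by simp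
      then show False using sig0 by simp
    qed
    from mscale_prop[OF rho0 n nz] have sig: "\<sigma> > 0"
      and eq: "(\<Sum>i<n. \<rho>0 (maha x y Bt St i / \<sigma>)) = real n / 2" unfolding \<sigma>_def by auto
    have SBt: "S Bt St \<le> real n / 2" unfolding S_def using le eq[symmetric] by (simp add: sum_mono)
    have kn2: "2 * real (kn n x y) < real n" using kn_small n by (simp add: field_simps)
    obtain \<epsilon> where ep: "\<epsilon> > 0" and epk: "\<forall>v w. card {i. i < n \<and> \<bar>v \<bullet> x i + w \<bullet> y i\<bar> < \<epsilon> * norm (v, w)} \<le> kn n x y"
      using eps_lemma by blast
    define m where "m = n - kn n x y"
    have knn: "kn n x y \<le> n" using kn2 by linarith
    have m2: "real n < 2 * real m" unfolding m_def using kn2 knn by (simp add: of_nat_diff)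
    have mpos: "real m > 0" using m2 n by linarith
    define a where "a = real n / (2 * real m)"
    have a1: "a < 1" unfolding a_def using m2 mpos by (simp add: field_simps)
    have am: "real m * a = real n / 2" unfolding a_def using mpos by simp
    obtain u0 where u0: "u0 > 0" "\<forall>t. u0 \<le> \<bar>t\<bar> \<longrightarrow> a < \<rho>1 t" using rho_big[OF rho1 a1] by blast
    define T0 where "T0 = u0 * \<sigma>"
    have T0: "T0 > 0" unfolding T0_def using u0 sig by simp
    have KC: "\<epsilon>\<^sup>2 * ((norm (B *v w))\<^sup>2 + (norm w)\<^sup>2) \<le> T0\<^sup>2 * (w \<bullet> (\<Gamma> *v w))"
      if pd: "pd_sym \<Gamma>" and dt: "det \<Gamma> = 1" and SB: "S B \<Gamma> \<le> real n / 2" for B \<Gamma> w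
    proof -
      define P where "P = matrix_inv \<Gamma>"
      note fa = pd_inv_facts[OF pd dt, folded P_def]
      define r where "r = (\<lambda>i. y i - transpose B *v x i)"
      define d where "d = (\<lambda>i. maha x y B \<Gamma> i)"
      have dr: "d i = sqrt (r i \<bullet> (P *v r i))" for i unfolding d_def r_def P_def maha_def by simp
      have d0: "d i \<ge> 0" for i unfolding dr using fa(4) by simp
      have dsq: "(d i)\<^sup>2 = r i \<bullet> (P *v r i)" for i unfolding dr using fa(4) by simp
      define Gs where "Gs = {i. i < n \<and> T0 \<le> d i}"
      have cardG: "card Gs < m"
      proof (rule ccontr)
        assume "\<not> card Gs < m"
        then have mG: "m \<le> card Gs" by simp
        then have Gne: "Gs \<noteq> {}" using mpos by auto
        have finG: "finite Gs" unfolding Gs_def by simp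
        have "a < \<rho>1 (d i / \<sigma>)" if "i \<in> Gs" for i
        proof -
          have "T0 / \<sigma> \<le> d i / \<sigma>" using that sig unfolding Gs_def by (simp add: divide_right_mono)
          then have "u0 \<le> \<bar>d i / \<sigma>\<bar>" unfolding T0_def using sig d0[of i] by simp
          then show ?thesis using u0 by blast
        qed
        then have "(\<Sum>i\<in>Gs. a) < (\<Sum>i\<in>Gs. \<rho>1 (d i / \<sigma>))" by (intro sum_strict_mono finG Gne) auto
        moreover have "(\<Sum>i\<in>Gs. a) \<ge> real n / 2"
        proof -
          have "real m * a \<le> real (card Gs) * a" using mG a1 am mpos
            by (intro mult_right_mono) (simp_all add: a_def)
          then show ?thesis using am by simp
        qed
        moreover have "(\<Sum>i\<in>Gs. \<rho>1 (d i / \<sigma>)) \<le> S B \<Gamma>" unfolding S_def d_def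
          by (rule sum_mono2) (use rho_nonneg[OF rho1] in \<open>auto simp: Gs_def\<close>)
        ultimately show False using SB by linarith
      qed
      define v where "v = - (B *v w)"
      define E where "E = {i. i < n \<and> \<bar>v \<bullet> x i + w \<bullet> y i\<bar> < \<epsilon> * norm (v, w)}"
      have cardE: "card E \<le> kn n x y" unfolding E_def using epk by blast
      obtain i where i: "i < n" "i \<notin> Gs" "i \<notin> E"
      proof -
        have "\<not> {..<n} \<subseteq> Gs \<union> E"
        proof
          assume "{..<n} \<subseteq> Gs \<union> E"
          then have "card {..<n} \<le> card (Gs \<union> E)" by (intro card_mono) (auto simp: Gs_def E_def)
          also have "\<dots> \<le> card Gs + card E" by (rule card_Un_le)
          finally show False using cardG cardE unfolding m_def using knn by simp
        qed
        then show ?thesis using that by auto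
      qed
      have dlt: "d i < T0" using i unfolding Gs_def by auto
      have ge: "\<epsilon> * norm (v, w) \<le> \<bar>v \<bullet> x i + w \<bullet> y i\<bar>" using i unfolding E_def by auto
      have idt: "v \<bullet> x i + w \<bullet> y i = w \<bullet> r i"
        unfolding v_def r_def inner_diff_right dot_transpose by simp
      have np: "(norm (v, w))\<^sup>2 = (norm (B *v w))\<^sup>2 + (norm w)\<^sup>2"
        unfolding v_def norm_Pair by simp
      have cs: "(w \<bullet> r i)\<^sup>2 \<le> (w \<bullet> (\<Gamma> *v w)) * (r i \<bullet> (P *v r i))"
        by (rule cs_inv[OF fa(6) fa(7) fa(1)])
      have rle: "r i \<bullet> (P *v r i) \<le> T0\<^sup>2"
      proof -
        have "(d i)\<^sup>2 \<le> T0\<^sup>2" using dlt d0[of i] by (intro power_mono) auto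
        then show ?thesis using dsq by simp
      qed
      have wG: "0 \<le> w \<bullet> (\<Gamma> *v w)" using fa(7) by blast
      have "\<epsilon>\<^sup>2 * (norm (v, w))\<^sup>2 = (\<epsilon> * norm (v, w))\<^sup>2" by (simp add: power_mult_distrib)
      also have "\<dots> \<le> (\<bar>w \<bullet> r i\<bar>)\<^sup>2" using ge idt ep by (intro power_mono) auto
      also have "\<dots> = (w \<bullet> r i)\<^sup>2" by simp
      also have "\<dots> \<le> (w \<bullet> (\<Gamma> *v w)) * (r i \<bullet> (P *v r i))" by (rule cs)
      also have "\<dots> \<le> (w \<bullet> (\<Gamma> *v w)) * T0\<^sup>2" using rle wG by (rule mult_left_mono)
      finally show ?thesis unfolding np by (simp add: mult.commute)
    qed
    define c1 where "c1 = \<epsilon>\<^sup>2 / T0\<^sup>2"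
    have c1: "c1 > 0" unfolding c1_def using ep T0 by simp
    obtain c2 where c2: "c2 > 0" and c2K: "\<forall>P\<in>K0 (1/c1). \<forall>z::real^'q. c2 * (norm z)\<^sup>2 \<le> z \<bullet> (P *v z)"
      using K0_lower by blast
    define RB where "RB = sqrt (T0\<^sup>2 / (c2 * \<epsilon>\<^sup>2))"
    have BL: "B \<in> KB RB \<and> matrix_inv \<Gamma> \<in> K0 (1/c1)"
      if pd: "pd_sym \<Gamma>" and dt: "det \<Gamma> = 1" and SB: "S B \<Gamma> \<le> real n / 2" for B \<Gamma>
    proof -
      define P where "P = matrix_inv \<Gamma>"
      note fa = pd_inv_facts[OF pd dt, folded P_def]
      have low: "\<forall>z. c1 * (norm z)\<^sup>2 \<le> z \<bullet> (\<Gamma> *v z)"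
      proof
        fix z :: "real^'q"
        have "\<epsilon>\<^sup>2 * (norm z)\<^sup>2 \<le> \<epsilon>\<^sup>2 * ((norm (B *v z))\<^sup>2 + (norm z)\<^sup>2)" by (intro mult_left_mono) auto
        also have "\<dots> \<le> T0\<^sup>2 * (z \<bullet> (\<Gamma> *v z))" by (rule KC[OF pd dt SB])
        finally show "c1 * (norm z)\<^sup>2 \<le> z \<bullet> (\<Gamma> *v z)" unfolding c1_def using T0
          by (simp add: field_simps)
      qed
      have up: "x \<bullet> (P *v x) \<le> (1/c1) * (norm x)\<^sup>2" for x
        using inv_bound[OF fa(1) c1 low, of x] by simp
      have ent: "\<bar>P$i$j\<bar> \<le> 1/c1" for i j
        by (rule entries_bound[OF fa(3) fa(4)]) (use up in blast)
      have PK: "P \<in> K0 (1/c1)" unfolding K0_def using fa(3,4,5) ent sym_iff by blast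
      then have low2: "\<forall>z. c2 * (norm z)\<^sup>2 \<le> z \<bullet> (P *v z)" using c2K by blast
      have up2: "x \<bullet> (\<Gamma> *v x) \<le> (norm x)\<^sup>2 / c2" for x by (rule inv_bound[OF fa(2) c2 low2])
      have "\<bar>B$i$j\<bar> \<le> RB" for i j
      proof -
        define w :: "real^'q" where "w = axis j 1"
        have "\<epsilon>\<^sup>2 * ((norm (B *v w))\<^sup>2 + (norm w)\<^sup>2) \<le> T0\<^sup>2 * (w \<bullet> (\<Gamma> *v w))" by (rule KC[OF pd dt SB])
        also have "\<dots> \<le> T0\<^sup>2 * ((norm w)\<^sup>2 / c2)" using up2[of w] by (intro mult_left_mono) auto
        finally have "\<epsilon>\<^sup>2 * ((norm (B *v w))\<^sup>2 + 1) \<le> T0\<^sup>2 / c2" unfolding w_def by simp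
        then have "\<epsilon>\<^sup>2 * (norm (B *v w))\<^sup>2 \<le> T0\<^sup>2 / c2" using ep
          by (smt (verit, best) distrib_left mult_nonneg_nonneg zero_le_power2)
        then have nb: "(norm (B *v w))\<^sup>2 \<le> T0\<^sup>2 / (c2 * \<epsilon>\<^sup>2)" using ep c2 by (simp add: field_simps)
        have "(B *v w)$i = B$i$j" unfolding w_def by (simp add: matrix_vector_mul_component inner_axis)
        then have "\<bar>B$i$j\<bar> \<le> norm (B *v w)" by (metis component_le_norm_cart)
        then have "\<bar>B$i$j\<bar>\<^sup>2 \<le> (norm (B *v w))\<^sup>2" by (intro power_mono) auto
        then have "\<bar>B$i$j\<bar>\<^sup>2 \<le> T0\<^sup>2 / (c2 * \<epsilon>\<^sup>2)" using nb by linarith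
        then show ?thesis unfolding RB_def by (rule real_le_rsqrt)
      qed
      then show ?thesis using PK unfolding KB_def P_def by blast
    qed
    define g where "g = (\<lambda>q::(real^'q^'p) \<times> (real^'q^'q). \<Sum>i<n. \<rho>1 (sqrt ((y i - transpose (fst q) *v x i) \<bullet> (snd q *v (y i - transpose (fst q) *v x i))) / \<sigma>))"
    have Sg: "S B \<Gamma> = g (B, matrix_inv \<Gamma>)" for B \<Gamma> unfolding S_def g_def maha_def by simp
    define K where "K = (KB RB :: (real^'q^'p) set) \<times> (K0 (1/c1) :: (real^'q^'q) set)"
    have cK: "compact K" unfolding K_def by (intro compact_Times compact_KB compact_K0)
    have BtK: "(Bt, matrix_inv St) \<in> K" unfolding K_def using BL[OF St_pd St_det SBt] by simp
    then have neK: "K \<noteq> {}" by blast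
    have cg: "continuous_on K g" unfolding g_def
      using cont_f[OF rho_cont[OF rho1] sig0] continuous_on_subset by blast
    obtain q0 where q0: "q0 \<in> K" and qm: "\<forall>q\<in>K. g q0 \<le> g q"
      using continuous_attains_inf[OF cK neK cg] by blast
    obtain Bs Ps where qs: "q0 = (Bs, Ps)" by (cases q0)
    have PsK: "Ps \<in> K0 (1/c1)" using q0 qs unfolding K_def by auto
    have symP: "transpose Ps = Ps" and psdP: "\<forall>x. 0 \<le> x \<bullet> (Ps *v x)" and dP: "det Ps = 1"
      using PsK unfolding K0_def sym_iff by auto
    define Gh where "Gh = matrix_inv Ps"
    have PG: "Ps ** Gh = mat 1" and GP: "Gh ** Ps = mat 1" using inv_both[of Ps] dP unfolding Gh_def by auto
    have symG: "transpose Gh = Gh" by (rule sym_inv[OF symP PG GP])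
    have pdG: "pd_sym Gh" unfolding pd_sym_def
    proof (intro conjI allI impI symG)
      fix z :: "real^'q" assume z: "z \<noteq> 0"
      define t where "t = Gh *v z"
      have Pt: "Ps *v t = z" unfolding t_def using PG by (metis matrix_vector_mul_assoc matrix_vector_mul_lid)
      have "t \<noteq> 0" using Pt z by auto
      then have "0 < t \<bullet> (Ps *v t)" using psd_pos[OF symP psdP] dP by simp
      also have "t \<bullet> (Ps *v t) = z \<bullet> (Gh *v z)" using Pt unfolding t_def by (simp add: inner_commute)
      finally show "0 < z \<bullet> (Gh *v z)" .
    qed
    have dG: "det Gh = 1"
    proof -
      have "det (Ps ** Gh) = 1" using PG by simp
      then show ?thesis using dP by (simp add: det_mul)
    qed
    have invG: "matrix_inv Gh = Ps" by (rule inv_unique[OF GP PG])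
    have SG: "S Bs Gh = g q0" unfolding Sg invG qs ..
    have "S Bs Gh \<le> S B \<Gamma>" if pd: "pd_sym \<Gamma>" and dt: "det \<Gamma> = 1" for B \<Gamma>
    proof (cases "S B \<Gamma> \<le> real n / 2")
      case True
      then have "(B, matrix_inv \<Gamma>) \<in> K" using BL[OF pd dt] unfolding K_def by simp
      then have "g q0 \<le> g (B, matrix_inv \<Gamma>)" using qm by blast
      then show ?thesis using SG Sg[of B \<Gamma>] by simp
    next
      case False
      have "g q0 \<le> g (Bt, matrix_inv St)" using qm BtK by blast
      then show ?thesis using False SBt SG Sg[of B \<Gamma>] Sg[of Bt St] by linarith
    qed
    then show ?thesis using pdG dG by blast
  qed
  then show ?thesis unfolding Let_def S_def \<sigma>_def .
qed


end
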